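(* Assume either that $g$ satisfies A1–A4 (and $\mathfrak{D}\subset\mathbb{R}^{m\times d}$ is arbitrary), or that $(g,\mathfrak{D})$ satisfy B1–B4. Then for every $X\in\mathbb{R}^{m\times n}$ and all $D,D'\in\mathfrak{D}$, $$|F_X(D)-F_X(D')|\le L_X(\bar g)\,\|D-D'\|_{1\to2}.$$
   Context: A penalty is a function $g:\mathbb{R}^d\to\mathbb{R}\cup\{+\infty\}$. $\mathcal{L}_x(D,\alpha)=\tfrac12\|x-D\alpha\|_2^2+g(\alpha)$, $f_x(D)=\inf_\alpha\mathcal{L}_x(D,\alpha)$, $F_X(D)=\frac1n\sum_i f_{x_i}(D)$ for $X=[x_1,\dots,x_n]$. $\|\Delta\|_{1\to2}=\max_j\|\delta_j\|_2$. A1: $g\ge0$; A2: $g$ lower semi-continuous; A3: $g(\alpha)\to+\infty$ as $\|\alpha\|\to\infty$; A4: $g(0)=0$. B1: $g=\chi_{\mathcal K}$ is the indicator of a set $\mathcal K$ ($0$ on $\mathcal K$, $+\infty$ outside); B2: there is $\kappa>0$ with $\kappa\|\alpha\|_1^2\le\|D\alpha\|_2^2$ for all $\alpha\in\mathcal K$, $D\in\mathfrak{D}$; B3: $0\in\mathcal K$; B4: $\mathfrak{D}$ convex. $\bar g(t)=\sup\{\|\alpha\|_1: g(\alpha)\le t\}$ under A1–A4, and $\bar g(t)=2\sqrt{2t/\kappa}$ under B1–B4. $L_X(\bar g)=\frac1n\sum_i\|x_i\|_2\,\bar g(\|x_i\|_2^2/2)$. *)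

theory Defs
  imports "HOL-Analysis.Analysis"
begin

text \<open>Penalties g : R^d -> R \<union> {+\<infinity>} are modelled as functions into ereal.
  Matrices in R^(m x d) are elements of real^'d^'m (rows indexed by 'm, columns by 'd);
  a data matrix X in R^(m x n) is an element of real^'n^'m, with columns x_i = column i X.\<close>

definition norm1 :: "real^'d \<Rightarrow> real" where
  "norm1 a = (\<Sum>j\<in>UNIV. \<bar>a $ j\<bar>)"

definition norm_1to2 :: "real^'d^'m \<Rightarrow> real" where
  "norm_1to2 M = Max (range (\<lambda>j. norm (column j M)))"

definition loss :: "(real^'d \<Rightarrow> ereal) \<Rightarrow> real^'m \<Rightarrow> real^'d^'m \<Rightarrow> real^'d \<Rightarrow> ereal" where
  "loss g x D a = ereal ((1/2) * (norm (x - D *v a))\<^sup>2) + g a"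

definition f_x :: "(real^'d \<Rightarrow> ereal) \<Rightarrow> real^'m \<Rightarrow> real^'d^'m \<Rightarrow> ereal" where
  "f_x g x D = (INF a. loss g x D a)"

definition F_X :: "(real^'d \<Rightarrow> ereal) \<Rightarrow> real^'n^'m \<Rightarrow> real^'d^'m \<Rightarrow> ereal" where
  "F_X g X D = ereal (1 / real CARD('n)) * (\<Sum>i\<in>UNIV. f_x g (column i X) D)"

definition lsc :: "(real^'d \<Rightarrow> ereal) \<Rightarrow> bool" where
  "lsc g \<longleftrightarrow> (\<forall>a. g a \<le> Liminf (at a) g)"

definition indicator_fun :: "(real^'d) set \<Rightarrow> real^'d \<Rightarrow> ereal" where
  "indicator_fun K a = (if a \<in> K then 0 else \<infinity>)"

definition gbarA :: "(real^'d \<Rightarrow> ereal) \<Rightarrow> real \<Rightarrow> ereal" where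
  "gbarA g t = (SUP a\<in>{a. g a \<le> ereal t}. ereal (norm1 a))"

definition gbarB :: "real \<Rightarrow> real \<Rightarrow> ereal" where
  "gbarB \<kappa> t = ereal (2 * sqrt (2 * t / \<kappa>))"

definition L_X :: "(real \<Rightarrow> ereal) \<Rightarrow> real^'n^'m \<Rightarrow> ereal" where
  "L_X gb X = ereal (1 / real CARD('n)) *
     (\<Sum>i\<in>UNIV. ereal (norm (column i X)) * gb ((norm (column i X))\<^sup>2 / 2))"

definition condA :: "(real^'d \<Rightarrow> ereal) \<Rightarrow> bool" where
  "condA g \<longleftrightarrow> (\<forall>a. g a \<ge> 0) \<and> lsc g \<and> (g \<longlongrightarrow> \<infinity>) at_infinity \<and> g 0 = 0"

definition condB :: "(real^'d \<Rightarrow> ereal) \<Rightarrow> (real^'d^'m) set \<Rightarrow> (real^'d) set \<Rightarrow> real \<Rightarrow> bool" where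
  "condB g \<D> K \<kappa> \<longleftrightarrow> g = indicator_fun K \<and> \<kappa> > 0 \<and>
     (\<forall>a\<in>K. \<forall>D\<in>\<D>. \<kappa> * (norm1 a)\<^sup>2 \<le> (norm (D *v a))\<^sup>2) \<and> 0 \<in> K \<and> convex \<D>"

end

theory Submission
  imports Defs
begin


lemma norm_1to2_ge: "norm (column j M) \<le> norm_1to2 M"
  unfolding norm_1to2_def by (rule Max_ge) auto

lemma norm_1to2_nonneg: "0 \<le> norm_1to2 M"
  using norm_1to2_ge[of _ M] norm_ge_zero order_trans by blast

lemma mv_bound: "norm ((M::real^'d^'m) *v a) \<le> norm1 a * norm_1to2 M"
proof -
  have "norm (M *v a) = norm (\<Sum>i\<in>UNIV. (a$i) *\<^sub>R column i M)"
    by (simp add: matrix_mult_sum scalar_mult_eq_scaleR)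
  also have "\<dots> \<le> (\<Sum>i\<in>UNIV. norm ((a$i) *\<^sub>R column i M))" by (rule norm_sum)
  also have "\<dots> \<le> (\<Sum>i\<in>UNIV. \<bar>a$i\<bar> * norm_1to2 M)"
    by (rule sum_mono) (simp add: mult_left_mono norm_1to2_ge)
  also have "\<dots> = norm1 a * norm_1to2 M" by (simp add: norm1_def sum_distrib_right)
  finally show ?thesis .
qed

lemma norm_1to2_swap: "norm_1to2 ((D::real^'d^'m) - E) = norm_1to2 (E - D)"
proof -
  have "column j (D - E) = - column j (E - D)" for j
    by (simp add: column_def vec_eq_iff)
  then show ?thesis unfolding norm_1to2_def by (simp add: norm_minus_commute)
qed

lemma tele:
  fixes \<phi> :: "real \<Rightarrow> real"
  assumes a: "a \<ge> 0" and b: "b \<ge> 0"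
    and H: "\<And>s t. s \<in> {0..1} \<Longrightarrow> t \<in> {0..1} \<Longrightarrow> \<phi> t \<le> \<phi> s + a*\<bar>t-s\<bar> + b*\<bar>t-s\<bar>^2"
  shows "\<phi> 1 \<le> \<phi> 0 + a"
proof -
  have step: "\<phi> 1 \<le> \<phi> 0 + a + b / real N" if N: "N \<ge> 1" for N :: nat
  proof -
    have "k \<le> N \<Longrightarrow> \<phi> (real k / N) \<le> \<phi> 0 + real k * (a / N + b / N^2)" for k
    proof (induction k)
      case 0 then show ?case by simp
    next
      case (Suc k)
      have s: "real k / N \<in> {0..1}" "real (Suc k) / N \<in> {0..1}"
        using Suc.prems N by (auto simp: field_simps)
      have d0: "real (Suc k) / N - real k / N = 1 / N"
        using N by (simp add: field_simps)
      have d: "\<bar>real (Suc k) / N - real k / N\<bar> = 1 / N"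
        unfolding d0 by simp
      have "\<phi> (real (Suc k) / N) \<le> \<phi> (real k / N) + a * (1/N) + b * (1/N)^2"
        using H[OF s] unfolding d d0 by simp
      also have "\<dots> \<le> \<phi> 0 + real k * (a / N + b / N^2) + a * (1/N) + b * (1/N)^2"
        using Suc by simp
      finally have "\<phi> (real (Suc k) / N) \<le> \<phi> 0 + real k * (a / N + b / N^2) + a * (1/N) + b * (1/N)^2" .
      moreover have "real k * (a / N + b / N^2) + a * (1/N) + b * (1/N)^2 = real (Suc k) * (a / N + b / N^2)"
        by (simp add: algebra_simps power2_eq_square add_divide_distrib)
      ultimately show ?case by linarith
    qed
    from this[of N] have "\<phi> (real N / N) \<le> \<phi> 0 + real N * (a / N + b / N^2)" by simp
    moreover have "real N * (a / N + b / N^2) = a + b / N" using N by (simp add: field_simps power2_eq_square)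
    moreover have "real N / N = 1" using N by simp
    ultimately show ?thesis by simp
  qed
  show ?thesis
  proof (rule ccontr)
    assume "\<not> ?thesis"
    then have e: "\<phi> 1 - \<phi> 0 - a > 0" by simp
    obtain N :: nat where N: "N > b / (\<phi> 1 - \<phi> 0 - a)" using reals_Archimedean2 by blast
    have "N \<ge> 1" using N b e
      by (metis divide_nonneg_pos less_one not_less of_nat_0 of_nat_less_0_iff order_le_less_trans zero_less_iff_neq_zero)
    then have "b / N < \<phi> 1 - \<phi> 0 - a" using N e b
      by (simp add: divide_less_eq mult.commute pos_divide_less_eq)
    with step[OF \<open>N \<ge> 1\<close>] show False by simp
  qed
qed

lemma segment_lip:
  fixes fr :: "real^'d^'m \<Rightarrow> real"
  assumes S: "convex S" and D: "D \<in> S" and E: "E \<in> S" and A: "A \<ge> 0" and B: "B \<ge> 0"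
    and H: "\<And>D E k. D \<in> S \<Longrightarrow> k \<ge> 0 \<Longrightarrow> (\<And>\<alpha>. norm ((E - D) *v \<alpha>) \<le> k * norm1 \<alpha>)
              \<Longrightarrow> fr E \<le> fr D + A*k + B*k^2"
  shows "fr E \<le> fr D + A * norm_1to2 (E - D)"
proof -
  define P where "P t = D + t *\<^sub>R (E - D)" for t
  define N where "N = norm_1to2 (E - D)"
  have N0: "N \<ge> 0" unfolding N_def by (rule norm_1to2_nonneg)
  have PS: "P t \<in> S" if "t \<in> {0..1}" for t
  proof -
    have "P t = (1 - t) *\<^sub>R D + t *\<^sub>R E" by (simp add: P_def algebra_simps)
    then show ?thesis using S D E that unfolding convex_def by auto
  qed
  have "fr (P 1) \<le> fr (P 0) + A * N"
  proof (rule tele[where \<phi>="\<lambda>t. fr (P t)" and b="B*N^2"])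
    show "0 \<le> A * N" using A N0 by simp
    show "0 \<le> B * N^2" using B by simp
    fix s t :: real assume st: "s \<in> {0..1}" "t \<in> {0..1}"
    have "fr (P t) \<le> fr (P s) + A*(\<bar>t-s\<bar>*N) + B*(\<bar>t-s\<bar>*N)^2"
    proof (rule H[OF PS[OF st(1)]])
      show "0 \<le> \<bar>t - s\<bar> * N" using N0 by simp
      fix \<alpha> :: "real^'d"
      have "(P t - P s) = (t - s) *\<^sub>R (E - D)" by (simp add: P_def algebra_simps)
      then have "(P t - P s) *v \<alpha> = (t - s) *\<^sub>R ((E - D) *v \<alpha>)"
        by (simp add: vec_eq_iff matrix_vector_mult_def sum_distrib_left mult.assoc)
      then have "norm ((P t - P s) *v \<alpha>) = \<bar>t - s\<bar> * norm ((E - D) *v \<alpha>)" by simp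
      also have "\<dots> \<le> \<bar>t - s\<bar> * (norm1 \<alpha> * N)"
        unfolding N_def by (rule mult_left_mono[OF mv_bound]) simp
      finally show "norm ((P t - P s) *v \<alpha>) \<le> \<bar>t - s\<bar> * N * norm1 \<alpha>" by (simp add: ac_simps)
    qed
    then show "fr (P t) \<le> fr (P s) + A * N * \<bar>t - s\<bar> + B * N\<^sup>2 * \<bar>t - s\<bar>\<^sup>2"
      by (simp add: algebra_simps power_mult_distrib)
  qed
  then show ?thesis by (simp add: P_def N_def)
qed



lemma fx_bounds:
  assumes "\<And>a. 0 \<le> g a" "g 0 = 0"
  shows "0 \<le> f_x g x D \<and> f_x g x D \<le> ereal ((1/2) * (norm x)\<^sup>2)"
proof
  show "0 \<le> f_x g x D" unfolding f_x_def loss_def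
    by (rule INF_greatest) (simp add: assms(1))
  have "f_x g x D \<le> loss g x D 0" unfolding f_x_def by (rule INF_lower) simp
  then show "f_x g x D \<le> ereal ((1/2) * (norm x)\<^sup>2)" by (simp add: loss_def assms(2))
qed

lemma fx_real:
  assumes "\<And>a. 0 \<le> g a" "g 0 = 0"
  shows "f_x g x D = ereal (real_of_ereal (f_x g x D))"
  using fx_bounds[of g, OF assms, of x D] by (cases "f_x g x D") auto

lemma quad:
  fixes y :: "real^'m"
  assumes "u \<ge> 0" "v \<ge> 0" "norm y \<le> u + v"
  shows "(1/2) * (norm y)\<^sup>2 \<le> (1/2) * u\<^sup>2 + u * v + (1/2) * v\<^sup>2"
proof -
  have "(norm y)\<^sup>2 \<le> (u + v)\<^sup>2" by (rule power_mono) (use assms in auto)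
  then show ?thesis by (simp add: power2_eq_square algebra_simps)
qed

lemma tri:
  "norm (x - E *v a) \<le> norm (x - D *v a) + norm ((E - D) *v a)"
proof -
  have "E *v a = D *v a + (E - D) *v a"
    by (metis add.commute diff_add_cancel matrix_vector_mult_add_rdistrib)
  then have "x - E *v a = (x - D *v a) - ((E - D) *v a)" by (simp add: algebra_simps)
  then show ?thesis by (metis norm_triangle_ineq4)
qed

lemma lsc_seq:
  fixes g :: "real^'d \<Rightarrow> ereal"
  assumes "lsc g" "\<beta> \<longlonglongrightarrow> a" "(\<lambda>n. g (\<beta> n)) \<longlonglongrightarrow> L"
  shows "g a \<le> L"
proof (rule ccontr)
  assume "\<not> g a \<le> L"
  then have "L < g a" by simp
  then obtain y where y: "L < y" "y < g a" using dense by blast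
  have "eventually (\<lambda>b. y < g b) (at a)"
    using assms(1) y(2) unfolding lsc_def le_Liminf_iff by blast
  then obtain d where d: "d > 0" "\<And>b. b \<noteq> a \<Longrightarrow> dist b a < d \<Longrightarrow> y < g b"
    unfolding eventually_at by auto
  have dd: "dist b a < d \<Longrightarrow> y < g b" for b using d y(2) by (cases "b = a") auto
  have "eventually (\<lambda>n. dist (\<beta> n) a < d) sequentially"
    using assms(2) d(1) by (rule tendstoD)
  then have e1: "eventually (\<lambda>n. y < g (\<beta> n)) sequentially"
    by eventually_elim (rule dd)
  have e2: "eventually (\<lambda>n. g (\<beta> n) < y) sequentially"
    using assms(3) y(1) by (rule order_tendstoD)
  have "eventually (\<lambda>n. False) sequentially" using e1 e2 by eventually_elim auto
  then show False by simp
qed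

lemma coercive:
  assumes "condA g"
  shows "\<exists>R. \<forall>a. R \<le> norm a \<longrightarrow> ereal r < g a"
proof -
  have "(g \<longlongrightarrow> \<infinity>) at_infinity" using assms unfolding condA_def by blast
  then have "eventually (\<lambda>a. ereal r < g a) at_infinity" unfolding tendsto_PInfty by blast
  then show ?thesis unfolding eventually_at_infinity by blast
qed

lemma minimizer:
  fixes g :: "real^'d \<Rightarrow> ereal" and D :: "real^'d^'m"
  assumes A: "condA g"
  shows "\<exists>a. loss g x D a = f_x g x D"
proof -
  have g0: "\<And>a. 0 \<le> g a" "g 0 = 0" using A unfolding condA_def by auto
  define mr where "mr = real_of_ereal (f_x g x D)"
  have m: "f_x g x D = ereal mr" unfolding mr_def by (rule fx_real[of g, OF g0])
  have mb: "0 \<le> mr" "mr \<le> (1/2) * (norm x)\<^sup>2" using fx_bounds[of g, OF g0, of x D] m by auto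
  define q where "q a = (1/2) * (norm (x - D *v a))\<^sup>2" for a
  have ex: "\<exists>a. loss g x D a < ereal (mr + 1 / (real n + 1))" for n :: nat
  proof -
    have "f_x g x D < ereal (mr + 1 / (real n + 1))" using m by simp
    then show ?thesis unfolding f_x_def INF_less_iff by blast
  qed
  then obtain \<alpha> where \<alpha>: "\<And>n. loss g x D (\<alpha> n) < ereal (mr + 1 / (real n + 1))" by metis
  have fin: "g (\<alpha> n) = ereal (real_of_ereal (g (\<alpha> n)))" for n
  proof -
    have "g (\<alpha> n) \<noteq> \<infinity>" using \<alpha>[of n] unfolding loss_def by auto
    then show ?thesis using g0(1)[of "\<alpha> n"] by (cases "g (\<alpha> n)") auto
  qed
  define gr where "gr n = real_of_ereal (g (\<alpha> n))" for n
  have leq: "loss g x D (\<alpha> n) = ereal (q (\<alpha> n) + gr n)" for n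
    unfolding loss_def q_def gr_def by (subst fin) simp
  have lr: "q (\<alpha> n) + gr n < mr + 1 / (real n + 1)" for n
    using \<alpha>[of n] leq[of n] by simp
  have lge: "mr \<le> q (\<alpha> n) + gr n" for n
  proof -
    have "f_x g x D \<le> loss g x D (\<alpha> n)" unfolding f_x_def by (rule INF_lower) simp
    then show ?thesis using m leq[of n] by simp
  qed
  obtain R where R: "\<And>a. R \<le> norm a \<Longrightarrow> ereal (mr + 1) < g a"
    using coercive[OF A] by blast
  have nb: "norm (\<alpha> n) < R" for n
  proof (rule ccontr)
    assume "\<not> norm (\<alpha> n) < R"
    then have "ereal (mr + 1) < g (\<alpha> n)" using R by simp
    then have "mr + 1 < gr n" using fin[of n] unfolding gr_def by (metis ereal_less_eq(3) not_le)
    moreover have "q (\<alpha> n) \<ge> 0" unfolding q_def by simp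
    moreover have "1 / (real n + 1) \<le> 1" by (simp add: field_simps)
    ultimately show False using lr[of n] by linarith
  qed
  have "bounded (range \<alpha>)" unfolding bounded_iff using nb by (auto intro!: exI[of _ R] less_imp_le)
  then obtain a r where r: "strict_mono r" "(\<alpha> \<circ> r) \<longlonglongrightarrow> a"
    using bounded_imp_convergent_subsequence by blast
  have qc: "(\<lambda>n. q (\<alpha> (r n))) \<longlonglongrightarrow> q a"
  proof -
    have bl: "bounded_linear (\<lambda>a. D *v a)" by (simp add: linear_conv_bounded_linear)
    have "(\<lambda>n. D *v (\<alpha> (r n))) \<longlonglongrightarrow> D *v a"
      using bounded_linear.tendsto[OF bl r(2)[unfolded comp_def]] .
    then show ?thesis unfolding q_def by (intro tendsto_intros)
  qed
  have inv: "1 / (real (r n) + 1) \<le> 1 / (real n + 1)" for n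
    using seq_suble[OF r(1), of n] by (simp add: frac_le)
  have lim0: "(\<lambda>n. 1 / (real n + 1)) \<longlonglongrightarrow> (0::real)"
    using LIMSEQ_inverse_real_of_nat by (simp add: inverse_eq_divide add.commute)
  have lsum: "(\<lambda>n. q (\<alpha> (r n)) + gr (r n)) \<longlonglongrightarrow> mr"
  proof (rule real_tendsto_sandwich[where f="\<lambda>n. mr" and h="\<lambda>n. mr + 1 / (real n + 1)"])
    show "\<forall>\<^sub>F n in sequentially. mr \<le> q (\<alpha> (r n)) + gr (r n)" using lge by simp
    show "\<forall>\<^sub>F n in sequentially. q (\<alpha> (r n)) + gr (r n) \<le> mr + 1 / (real n + 1)"
    proof (rule always_eventually, rule allI)
      fix n
      show "q (\<alpha> (r n)) + gr (r n) \<le> mr + 1 / (real n + 1)"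
        using lr[of "r n"] inv[of n] by linarith
    qed
    show "(\<lambda>n. mr) \<longlonglongrightarrow> mr" by simp
    show "(\<lambda>n. mr + 1 / (real n + 1)) \<longlonglongrightarrow> mr" using tendsto_add[OF tendsto_const lim0] by simp
  qed
  have "(\<lambda>n. (q (\<alpha> (r n)) + gr (r n)) - q (\<alpha> (r n))) \<longlonglongrightarrow> mr - q a"
    by (intro tendsto_intros lsum qc)
  then have "(\<lambda>n. gr (r n)) \<longlonglongrightarrow> mr - q a" by simp
  then have "(\<lambda>n. ereal (gr (r n))) \<longlonglongrightarrow> ereal (mr - q a)" by (rule tendsto_ereal)
  then have "(\<lambda>n. g ((\<alpha> \<circ> r) n)) \<longlonglongrightarrow> ereal (mr - q a)"
    using fin unfolding gr_def comp_def by simp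
  then have "g a \<le> ereal (mr - q a)" using A r(2) lsc_seq unfolding condA_def by blast
  then have "loss g x D a \<le> f_x g x D" unfolding loss_def m q_def
    by (metis add.commute diff_add_cancel ereal_add_le_add_iff2 ereal_minus(1) plus_ereal.simps(1))
  moreover have "f_x g x D \<le> loss g x D a" unfolding f_x_def by (rule INF_lower) simp
  ultimately show ?thesis by (intro exI[of _ a]) simp
qed



lemma norm1_le: "norm1 (a::real^'d) \<le> real CARD('d) * norm a"
proof -
  have "norm1 a \<le> (\<Sum>j\<in>(UNIV::'d set). norm a)" unfolding norm1_def
    by (rule sum_mono) (rule component_le_norm_cart)
  then show ?thesis by simp
qed

lemma norm1_nonneg: "0 \<le> norm1 a" unfolding norm1_def by (simp add: sum_nonneg)

lemma gbarA_fin: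
  fixes g :: "real^'d \<Rightarrow> ereal"
  assumes A: "condA g" and t: "t \<ge> 0"
  shows "\<exists>c\<ge>0. gbarA g t = ereal c"
proof -
  obtain R where R: "\<And>a. R \<le> norm a \<Longrightarrow> ereal t < g a" using coercive[OF A] by blast
  have up: "gbarA g t \<le> ereal (real CARD('d) * R)" unfolding gbarA_def
  proof (rule SUP_least)
    fix a assume "a \<in> {a. g a \<le> ereal t}"
    then have ga: "g a \<le> ereal t" by simp
    have "norm a < R"
    proof (rule ccontr)
      assume "\<not> norm a < R"
      then have "ereal t < g a" using R by simp
      with ga show False by simp
    qed
    then have "real CARD('d) * norm a \<le> real CARD('d) * R" by (simp add: mult_left_mono)
    then have "norm1 a \<le> real CARD('d) * R"
      using norm1_le[of a] by linarith
    then show "ereal (norm1 a) \<le> ereal (real CARD('d) * R)" by simp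
  qed
  have lo: "0 \<le> gbarA g t" unfolding gbarA_def
  proof -
    have "0 \<in> {a. g a \<le> ereal t}" using A t unfolding condA_def by simp
    then have "ereal (norm1 (0::real^'d)) \<le> (SUP a\<in>{a. g a \<le> ereal t}. ereal (norm1 a))"
      by (rule SUP_upper)
    then show "0 \<le> (SUP a\<in>{a. g a \<le> ereal t}. ereal (norm1 a))" by (simp add: norm1_def zero_ereal_def)
  qed
  show ?thesis using up lo by (cases "gbarA g t") auto
qed

lemma stepA:
  fixes g :: "real^'d \<Rightarrow> ereal" and D E :: "real^'d^'m"
  assumes A: "condA g" and k: "k \<ge> 0"
    and kb: "\<And>\<alpha>. norm ((E - D) *v \<alpha>) \<le> k * norm1 \<alpha>"
    and c: "gbarA g ((norm x)\<^sup>2 / 2) = ereal c"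
  shows "real_of_ereal (f_x g x E) \<le> real_of_ereal (f_x g x D) + (norm x * c) * k + (c\<^sup>2 / 2) * k\<^sup>2"
proof -
  have g0: "\<And>a. 0 \<le> g a" "g 0 = 0" using A unfolding condA_def by auto
  obtain a where a: "loss g x D a = f_x g x D" using minimizer[OF A] by blast
  define mr where "mr = real_of_ereal (f_x g x D)"
  have m: "f_x g x D = ereal mr" unfolding mr_def by (rule fx_real[of g, OF g0])
  have mb: "mr \<le> (1/2) * (norm x)\<^sup>2" using fx_bounds[of g, OF g0, of x D] m by auto
  define u where "u = norm (x - D *v a)"
  have gfin: "g a = ereal (real_of_ereal (g a))"
  proof -
    have "g a \<noteq> \<infinity>" using a m unfolding loss_def by auto
    then show ?thesis using g0(1)[of a] by (cases "g a") auto
  qed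
  define \<gamma> where "\<gamma> = real_of_ereal (g a)"
  have \<gamma>0: "\<gamma> \<ge> 0" unfolding \<gamma>_def using g0(1)[of a] by (simp add: real_of_ereal_pos)
  have sum: "(1/2) * u\<^sup>2 + \<gamma> = mr"
  proof -
    have "loss g x D a = ereal ((1/2) * u\<^sup>2 + \<gamma>)" unfolding loss_def u_def \<gamma>_def
      by (subst gfin) simp
    then show ?thesis using a m by simp
  qed
  have gle: "g a \<le> ereal ((norm x)\<^sup>2 / 2)"
  proof -
    have "0 \<le> (1/2) * u\<^sup>2" by simp
    then have "\<gamma> \<le> (norm x)\<^sup>2 / 2" using sum mb by linarith
    then show ?thesis using gfin unfolding \<gamma>_def by (metis ereal_less_eq(3))
  qed
  have n1: "norm1 a \<le> c"
  proof -
    have "ereal (norm1 a) \<le> gbarA g ((norm x)\<^sup>2 / 2)" unfolding gbarA_def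
      by (rule SUP_upper) (simp add: gle)
    then show ?thesis using c by simp
  qed
  have u: "u \<le> norm x"
  proof -
    have "u\<^sup>2 \<le> (norm x)\<^sup>2" using sum mb \<gamma>0 by linarith
    then show ?thesis by (rule power2_le_imp_le) simp
  qed
  have c0: "c \<ge> 0" using n1 norm1_nonneg[of a] by linarith
  have "k * norm1 a \<le> k * c" using n1 k by (simp add: mult_left_mono)
  then have v: "norm ((E - D) *v a) \<le> k * c" using kb[of a] by linarith
  have "norm (x - E *v a) \<le> u + k * c" using tri[of x E a D] v unfolding u_def by linarith
  then have qE: "(1/2) * (norm (x - E *v a))\<^sup>2 \<le> (1/2) * u\<^sup>2 + u * (k * c) + (1/2) * (k * c)\<^sup>2"
    by (rule quad[OF _ mult_nonneg_nonneg[OF k c0], rotated]) (simp add: u_def)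
  have "f_x g x E \<le> loss g x E a" unfolding f_x_def by (rule INF_lower) simp
  also have "\<dots> = ereal ((1/2) * (norm (x - E *v a))\<^sup>2 + \<gamma>)" unfolding loss_def \<gamma>_def
    by (subst gfin) simp
  finally have fe: "real_of_ereal (f_x g x E) \<le> (1/2) * (norm (x - E *v a))\<^sup>2 + \<gamma>"
    using fx_bounds[of g, OF g0, of x E] by (cases "f_x g x E") auto
  have "u * (k * c) \<le> norm x * (k * c)" using u k c0
    by (simp add: mult_right_mono)
  moreover have "(1/2) * (k * c)\<^sup>2 = (c\<^sup>2 / 2) * k\<^sup>2" by (simp add: power_mult_distrib)
  moreover have "norm x * (k * c) = (norm x * c) * k" by simp
  ultimately show ?thesis using fe qE sum unfolding mr_def[symmetric] by linarith
qed



lemma stepB: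
  fixes g :: "real^'d \<Rightarrow> ereal" and D E :: "real^'d^'m"
  assumes B: "condB g \<D> K \<kappa>" and DD: "D \<in> \<D>" and k: "k \<ge> 0"
    and kb: "\<And>\<alpha>. norm ((E - D) *v \<alpha>) \<le> k * norm1 \<alpha>"
  shows "real_of_ereal (f_x g x E) \<le> real_of_ereal (f_x g x D)
           + (norm x * (2 * norm x / sqrt \<kappa>)) * k + ((2 * norm x / sqrt \<kappa>)\<^sup>2 / 2) * k\<^sup>2"
proof -
  have gK: "g = indicator_fun K" and \<kappa>: "\<kappa> > 0" and 0: "0 \<in> K"
    and kap: "\<And>a. a \<in> K \<Longrightarrow> \<kappa> * (norm1 a)\<^sup>2 \<le> (norm (D *v a))\<^sup>2"
    using B DD unfolding condB_def by auto
  have g0: "\<And>a. 0 \<le> g a" "g 0 = 0" using 0 unfolding gK indicator_fun_def by auto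
  define mr where "mr = real_of_ereal (f_x g x D)"
  have m: "f_x g x D = ereal mr" unfolding mr_def by (rule fx_real[of g, OF g0])
  have mb: "mr \<le> (1/2) * (norm x)\<^sup>2" using fx_bounds[of g, OF g0, of x D] m by auto
  define s where "s e = sqrt ((norm x)\<^sup>2 + 2 * e)" for e :: real
  define c' where "c' e = (norm x + s e) / sqrt \<kappa>" for e
  define h where "h e = mr + e + s e * k * c' e + (1/2) * k\<^sup>2 * (c' e)\<^sup>2" for e
  have bound: "real_of_ereal (f_x g x E) \<le> h e" if e: "e > 0" for e
  proof -
    have "f_x g x D < ereal (mr + e)" using m e by simp
    then obtain a where a: "loss g x D a < ereal (mr + e)" unfolding f_x_def INF_less_iff by blast
    have aK: "a \<in> K"
    proof (rule ccontr)
      assume "a \<notin> K"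
      then have "loss g x D a = \<infinity>" unfolding loss_def gK indicator_fun_def by simp
      with a show False by simp
    qed
    have gz: "g a = 0" using aK unfolding gK indicator_fun_def by simp
    define u where "u = norm (x - D *v a)"
    have "(1/2) * u\<^sup>2 < mr + e" using a gz unfolding loss_def u_def by simp
    then have "u\<^sup>2 \<le> (norm x)\<^sup>2 + 2 * e" using mb by linarith
    then have us: "u \<le> s e" unfolding s_def by (simp add: real_le_rsqrt)
    have "D *v a = x - (x - D *v a)" by simp
    then have Dn: "norm (D *v a) \<le> norm x + u" unfolding u_def by (metis norm_triangle_ineq4)
    have "sqrt (\<kappa> * (norm1 a)\<^sup>2) \<le> sqrt ((norm (D *v a))\<^sup>2)"
      using kap[OF aK] by (rule real_sqrt_le_mono)
    then have "sqrt \<kappa> * norm1 a \<le> norm (D *v a)"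
      by (simp add: real_sqrt_mult norm1_nonneg)
    then have "sqrt \<kappa> * norm1 a \<le> norm x + s e" using Dn us by linarith
    then have n1: "norm1 a \<le> c' e" unfolding c'_def using \<kappa>
      by (simp add: pos_le_divide_eq mult.commute)
    have c0: "c' e \<ge> 0" using n1 norm1_nonneg[of a] by linarith
    have "k * norm1 a \<le> k * c' e" using n1 k by (simp add: mult_left_mono)
    then have v: "norm ((E - D) *v a) \<le> k * c' e" using kb[of a] by linarith
    have "norm (x - E *v a) \<le> u + k * c' e" using tri[of x E a D] v unfolding u_def by linarith
    then have qE: "(1/2) * (norm (x - E *v a))\<^sup>2 \<le> (1/2) * u\<^sup>2 + u * (k * c' e) + (1/2) * (k * c' e)\<^sup>2"
      by (rule quad[OF _ mult_nonneg_nonneg[OF k c0], rotated]) (simp add: u_def)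
    have "f_x g x E \<le> loss g x E a" unfolding f_x_def by (rule INF_lower) simp
    also have "\<dots> = ereal ((1/2) * (norm (x - E *v a))\<^sup>2)" unfolding loss_def gz by simp
    finally have fe: "real_of_ereal (f_x g x E) \<le> (1/2) * (norm (x - E *v a))\<^sup>2"
      using fx_bounds[of g, OF g0, of x E] by (cases "f_x g x E") auto
    have "u * (k * c' e) \<le> s e * (k * c' e)" using us k c0 by (simp add: mult_right_mono)
    moreover have "(1/2) * (k * c' e)\<^sup>2 = (1/2) * k\<^sup>2 * (c' e)\<^sup>2" by (simp add: power_mult_distrib)
    moreover have "s e * (k * c' e) = s e * k * c' e" by simp
    moreover have "(1/2) * u\<^sup>2 < mr + e" by fact
    ultimately show ?thesis using fe qE unfolding h_def by linarith
  qed
  have lim: "(h \<longlongrightarrow> h 0) (at_right 0)"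
    unfolding h_def c'_def s_def by (intro tendsto_intros) (use \<kappa> in \<open>auto intro: tendsto_ident_at\<close>)
  have le: "real_of_ereal (f_x g x E) \<le> h 0"
    by (rule tendsto_lowerbound[OF lim]) (auto simp: eventually_at_right_less bound eventually_at_right_field intro!: exI[of _ 1])
  have s0: "s 0 = norm x" unfolding s_def by simp
  have "h 0 = mr + (norm x * (2 * norm x / sqrt \<kappa>)) * k + ((2 * norm x / sqrt \<kappa>)\<^sup>2 / 2) * k\<^sup>2"
    unfolding h_def c'_def s0 by (simp add: power2_eq_square algebra_simps)
  then show ?thesis using le unfolding mr_def by simp
qed



lemma lip_col:
  fixes fr :: "real^'d^'m \<Rightarrow> real"
  assumes S: "convex S" and D: "D \<in> S" and E: "D' \<in> S" and A: "A \<ge> 0" and B: "B \<ge> 0"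
    and H: "\<And>D E k. D \<in> S \<Longrightarrow> k \<ge> 0 \<Longrightarrow> (\<And>\<alpha>. norm ((E - D) *v \<alpha>) \<le> k * norm1 \<alpha>)
              \<Longrightarrow> fr E \<le> fr D + A*k + B*k^2"
  shows "\<bar>fr D - fr D'\<bar> \<le> A * norm_1to2 (D - D')"
proof -
  have 1: "fr D' \<le> fr D + A * norm_1to2 (D' - D)" by (rule segment_lip[OF S D E A B H])
  have 2: "fr D \<le> fr D' + A * norm_1to2 (D - D')" by (rule segment_lip[OF S E D A B H])
  show ?thesis using 1 2 norm_1to2_swap[of D D'] by (simp add: abs_le_iff)
qed

lemma final:
  fixes X :: "real^'n^'m" and g :: "real^'d \<Rightarrow> ereal" and D D' :: "real^'d^'m"
  assumes fx: "\<And>i E. f_x g (column i X) E = ereal (fr i E)"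
    and gb: "\<And>i. gb ((norm (column i X))\<^sup>2 / 2) = ereal (c i)"
    and lip: "\<And>i. \<bar>fr i D - fr i D'\<bar> \<le> norm (column i X) * c i * norm_1to2 (D - D')"
  shows "\<bar>F_X g X D - F_X g X D'\<bar> \<le> L_X gb X * ereal (norm_1to2 (D - D'))"
proof -
  define n where "n = real CARD('n)"
  have F: "F_X g X E = ereal (1 / n * (\<Sum>i\<in>UNIV. fr i E))" for E
    unfolding F_X_def fx n_def by simp
  have L: "L_X gb X = ereal (1 / n * (\<Sum>i\<in>UNIV. norm (column i X) * c i))"
    unfolding L_X_def gb n_def by simp
  have "\<bar>1 / n * (\<Sum>i\<in>UNIV. fr i D) - 1 / n * (\<Sum>i\<in>UNIV. fr i D')\<bar>
        = 1 / n * \<bar>\<Sum>i\<in>UNIV. fr i D - fr i D'\<bar>"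
    by (simp add: n_def sum_subtractf diff_divide_distrib[symmetric] abs_divide)
  also have "\<dots> \<le> 1 / n * (\<Sum>i\<in>UNIV. \<bar>fr i D - fr i D'\<bar>)"
    by (rule mult_left_mono) (auto simp: n_def)
  also have "\<dots> \<le> 1 / n * (\<Sum>i\<in>UNIV. norm (column i X) * c i * norm_1to2 (D - D'))"
    by (rule mult_left_mono) (auto simp: n_def intro: sum_mono lip)
  also have "\<dots> = 1 / n * (\<Sum>i\<in>UNIV. norm (column i X) * c i) * norm_1to2 (D - D')"
    by (simp add: sum_distrib_right)
  finally show ?thesis unfolding F L by simp
qed

theorem mainTheorem9:
  fixes g :: "real^'d \<Rightarrow> ereal" and \<D> :: "(real^'d^'m) set"
    and X :: "real^'n^'m" and D D' :: "real^'d^'m"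
  assumes "condA g \<or> (\<exists>K \<kappa>. condB g \<D> K \<kappa>)"
    and "D \<in> \<D>" and "D' \<in> \<D>"
  shows "(condA g \<longrightarrow>
            \<bar>F_X g X D - F_X g X D'\<bar> \<le> L_X (gbarA g) X * ereal (norm_1to2 (D - D')))
       \<and> (\<forall>K \<kappa>. condB g \<D> K \<kappa> \<longrightarrow>
            \<bar>F_X g X D - F_X g X D'\<bar> \<le> L_X (gbarB \<kappa>) X * ereal (norm_1to2 (D - D')))"
proof (intro conjI impI allI)
  assume A: "condA g"
  have g0: "\<And>a. 0 \<le> g a" "g 0 = 0" using A unfolding condA_def by auto
  define fr where "fr i E = real_of_ereal (f_x g (column i X) E)" for i E
  define c where "c i = real_of_ereal (gbarA g ((norm (column i X))\<^sup>2 / 2))" for i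
  have gb: "gbarA g ((norm (column i X))\<^sup>2 / 2) = ereal (c i)" and c0: "c i \<ge> 0" for i
    using gbarA_fin[OF A, of "(norm (column i X))\<^sup>2 / 2"] unfolding c_def by auto
  show "\<bar>F_X g X D - F_X g X D'\<bar> \<le> L_X (gbarA g) X * ereal (norm_1to2 (D - D'))"
  proof (rule final[where fr=fr and c=c])
    show "f_x g (column i X) E = ereal (fr i E)" for i E
      unfolding fr_def by (rule fx_real[of g, OF g0])
    show "gbarA g ((norm (column i X))\<^sup>2 / 2) = ereal (c i)" for i by (rule gb)
    fix i
    show "\<bar>fr i D - fr i D'\<bar> \<le> norm (column i X) * c i * norm_1to2 (D - D')"
    proof (rule lip_col[where S=UNIV and B="(c i)\<^sup>2 / 2"])
      show "0 \<le> norm (column i X) * c i" using c0 by simp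
      fix D E :: "real^'d^'m" and k :: real
      assume "k \<ge> 0" "\<And>\<alpha>. norm ((E - D) *v \<alpha>) \<le> k * norm1 \<alpha>"
      then show "fr i E \<le> fr i D + norm (column i X) * c i * k + (c i)\<^sup>2 / 2 * k\<^sup>2"
        unfolding fr_def by (rule stepA[OF A]) (rule gb)
    qed auto
  qed
next
  fix K \<kappa> assume B: "condB g \<D> K \<kappa>"
  have gK: "g = indicator_fun K" and \<kappa>: "\<kappa> > 0" and 0: "0 \<in> K" and cv: "convex \<D>"
    using B unfolding condB_def by auto
  have g0: "\<And>a. 0 \<le> g a" "g 0 = 0" using 0 unfolding gK indicator_fun_def by auto
  define fr where "fr i E = real_of_ereal (f_x g (column i X) E)" for i E
  define c where "c i = 2 * norm (column i X) / sqrt \<kappa>" for i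
  have c0: "c i \<ge> 0" for i unfolding c_def using \<kappa> by simp
  have gb: "gbarB \<kappa> ((norm (column i X))\<^sup>2 / 2) = ereal (c i)" for i
  proof -
    have "sqrt (2 * ((norm (column i X))\<^sup>2 / 2) / \<kappa>) = norm (column i X) / sqrt \<kappa>"
      by (simp add: real_sqrt_divide)
    then show ?thesis unfolding gbarB_def c_def by simp
  qed
  show "\<bar>F_X g X D - F_X g X D'\<bar> \<le> L_X (gbarB \<kappa>) X * ereal (norm_1to2 (D - D'))"
  proof (rule final[where fr=fr and c=c])
    show "f_x g (column i X) E = ereal (fr i E)" for i E
      unfolding fr_def by (rule fx_real[of g, OF g0])
    show "gbarB \<kappa> ((norm (column i X))\<^sup>2 / 2) = ereal (c i)" for i by (rule gb)
    fix i
    show "\<bar>fr i D - fr i D'\<bar> \<le> norm (column i X) * c i * norm_1to2 (D - D')"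
    proof (rule lip_col[where S="\<D>" and B="(c i)\<^sup>2 / 2"])
      show "0 \<le> norm (column i X) * c i" using c0 by simp
      fix D E :: "real^'d^'m" and k :: real
      assume "D \<in> \<D>" "k \<ge> 0" "\<And>\<alpha>. norm ((E - D) *v \<alpha>) \<le> k * norm1 \<alpha>"
      then show "fr i E \<le> fr i D + norm (column i X) * c i * k + (c i)\<^sup>2 / 2 * k\<^sup>2"
        unfolding fr_def c_def by (rule stepB[OF B])
    qed (use cv assms in auto)
  qed
qed


end
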